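(* Fix $\alpha\in(0,1)$ and an integer $d\ge1$, and define \[ \gamma^L_0(t_1,t_2,\alpha)=\frac{(t_1-d)\,t_2}{\left(\frac{\alpha^2}{t_2+1}\right)^{\frac{1}{t_1-d+1}}(t_2+1)-1}-(t_1-d). \] Suppose $t_1,t_2\to\infty$ and there exist constants $0<r<R<\infty$ with $r\le t_1/t_2\le R$. Then $\gamma^L_0(t_1,t_2,\alpha)=2\log(1/\alpha)+\log(t_2+1)+o(1)$. *)

theory Defs
  imports "HOL-Analysis.Analysis"
begin

definition gammaL0 :: "nat \<Rightarrow> real \<Rightarrow> real \<Rightarrow> real \<Rightarrow> real" where
  "gammaL0 d t1 t2 \<alpha> =
     (t1 - real d) * t2 /
       ((\<alpha>\<^sup>2 / (t2 + 1)) powr (1 / (t1 - real d + 1)) * (t2 + 1) - 1)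
     - (t1 - real d)"

end

theory Submission
  imports Defs "HOL-Real_Asymp.Real_Asymp"
begin

lemma pointwise:
  fixes \<alpha> r t1 t2 :: real and d :: nat
  assumes a0: "0 < \<alpha>" and a1: "\<alpha> < 1" and r0: "0 < r"
    and t5: "t2 \<ge> 5" and td: "r * t2 \<ge> 2 * real d" and tr: "t1 \<ge> r * t2"
    and tv: "2 * (ln (t2+1) - 2 * ln \<alpha>) / (r * t2) \<le> 1"
  shows "\<bar>gammaL0 d t1 t2 \<alpha> - (2 * ln (1 / \<alpha>) + ln (t2 + 1))\<bar>
     \<le> 2 * (ln (t2+1) - 2 * ln \<alpha>) / (r * t2) + 2 * (ln (t2+1) - 2 * ln \<alpha>)^2 / (r * t2)
        + 12 * (ln (t2+1) - 2 * ln \<alpha>) / (t2 + 1)"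
proof -
  define n where "n = t1 - real d"
  define m where "m = t2 + 1"
  define K where "K = ln (t2+1) - 2 * ln \<alpha>"
  have m6: "m \<ge> 6" using t5 m_def by simp
  have lna: "ln \<alpha> < 0" using a0 a1 by simp
  have lnm: "ln m > 0" using m6 by simp
  have K0: "K > 0" using lna lnm unfolding K_def m_def by simp
  have Kalt: "2 * ln (1 / \<alpha>) + ln (t2 + 1) = K" using a0 by (simp add: K_def ln_div)
  have t0: "t2 > 0" using t5 by simp
  have rt: "r * t2 > 0" using r0 t0 by simp
  have n1: "n > 0" and n2: "n + 1 \<ge> r * t2 / 2"
    using td tr rt unfolding n_def by linarith+
  define v where "v = K / (n+1)"
  have v0: "v > 0" using K0 n1 v_def by simp
  have vb: "v \<le> 2 * K / (r * t2)"
  proof -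
    have "v \<le> K / (r * t2 / 2)" unfolding v_def
      by (rule divide_left_mono) (use K0 n2 rt in auto)
    thus ?thesis by (simp add: mult.commute)
  qed
  have v1: "v \<le> 1" using vb tv K_def by simp
  have pw: "(\<alpha>\<^sup>2 / (t2 + 1)) powr (1 / (t1 - real d + 1)) = exp (- v)"
  proof -
    have "ln (\<alpha>\<^sup>2 / (t2 + 1)) = - K" using a0 t0 by (simp add: K_def ln_div ln_mult power2_eq_square)
    thus ?thesis using a0 t0 by (simp add: powr_def v_def n_def)
  qed
  have ev1: "exp v \<ge> 1 + v" by (rule exp_ge_add_one_self)
  have ev2: "exp v \<le> 1 + v + v^2" by (rule exp_bound) (use v0 v1 in auto)
  have ev3: "exp v \<le> 3" using ev2 v0 v1 by (smt (verit) power_le_one)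
  define D where "D = m - exp v"
  have D: "D \<ge> m / 2" using ev3 m6 D_def by simp
  have Dp: "D > 0" using D m6 by simp
  have E: "gammaL0 d t1 t2 \<alpha> = n * (exp v - 1) * (m / D)"
  proof -
    have "gammaL0 d t1 t2 \<alpha> = n * (m - 1) / (exp (-v) * m - 1) - n"
      unfolding gammaL0_def pw by (simp add: n_def m_def)
    also have "exp (-v) * m - 1 = D / exp v" by (simp add: D_def exp_minus field_simps)
    also have "n * (m - 1) / (D / exp v) - n = n * (exp v - 1) * (m / D)"
      using Dp by (simp add: D_def field_simps)
    finally show ?thesis .
  qed
  have mD1: "m / D \<ge> 1" using Dp D_def by simp
  have mD2: "m / D \<le> 1 + 6 / m"
  proof -
    have "m / D = 1 + exp v / D" using Dp by (simp add: D_def field_simps)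
    also have "exp v / D \<le> 3 / (m / 2)"
      by (rule frac_le) (use ev3 D m6 in auto)
    finally show ?thesis by simp
  qed
  have low: "gammaL0 d t1 t2 \<alpha> \<ge> n * v"
  proof -
    have "n * v \<le> n * (exp v - 1)" using ev1 n1 by (intro mult_left_mono) linarith+
    also have "\<dots> \<le> n * (exp v - 1) * (m / D)"
    proof -
      have "0 \<le> n * (exp v - 1)" using n1 v0 by simp
      from mult_left_mono[OF mD1 this] show ?thesis by simp
    qed
    finally show ?thesis using E by simp
  qed
  have up: "gammaL0 d t1 t2 \<alpha> \<le> n * (v + v^2) * (1 + 6 / m)"
    unfolding E by (rule mult_mono) (use ev1 ev2 v0 n1 mD2 m6 mD1 in auto)
  have Kv: "K = (n + 1) * v" using n1 by (simp add: v_def)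
  have nvK: "n * v \<le> K" using Kv v0 by simp
  have nv2: "n * v^2 \<le> 2 * K^2 / (r * t2)"
  proof -
    have "n * v^2 = (n * v) * v" by (simp add: power2_eq_square)
    also have "\<dots> \<le> K * (2 * K / (r * t2))"
      by (rule mult_mono) (use nvK vb n1 v0 K0 in auto)
    finally show ?thesis by (simp add: power2_eq_square mult_ac)
  qed
  have nvm: "12 * (n * v) / m \<le> 12 * K / m"
    by (rule divide_right_mono) (use nvK m6 in auto)
  have "n * (v + v^2) * (1 + 6 / m) = n * v + n * v^2 + 6 * (n * v) / m + 6 * (n * v^2) / m"
    by (simp add: field_simps)
  also have "6 * (n * v^2) / m \<le> 6 * (n * v) / m"
    using v0 v1 n1 m6 by (simp add: divide_right_mono power2_eq_square mult_le_cancel_left1)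
  finally have up2: "gammaL0 d t1 t2 \<alpha> \<le> n * v + n * v^2 + 12 * (n * v) / m"
    using up by simp
  have Kv2: "K = n * v + v" using Kv by (simp add: algebra_simps)
  have rhs: "2 * (ln (t2+1) - 2 * ln \<alpha>) / (r * t2) + 2 * (ln (t2+1) - 2 * ln \<alpha>)^2 / (r * t2)
        + 12 * (ln (t2+1) - 2 * ln \<alpha>) / (t2 + 1) = 2 * K / (r * t2) + 2 * K^2 / (r * t2) + 12 * K / m"
    by (simp add: K_def m_def)
  have nn: "0 \<le> 2 * K^2 / (r * t2)" "0 \<le> 12 * K / m" using rt K0 m6 by auto
  show ?thesis
    unfolding Kalt rhs abs_le_iff
    using low up2 nv2 nvm vb Kv2 v0 nn by linarith
qed

theorem proposition2:
  fixes \<alpha> r R :: real and d :: nat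
  assumes "0 < \<alpha>" "\<alpha> < 1" "d \<ge> 1" "0 < r" "r < R"
  shows "((\<lambda>(t1, t2). gammaL0 d t1 t2 \<alpha> - (2 * ln (1 / \<alpha>) + ln (t2 + 1))) \<longlongrightarrow> 0)
           (inf (at_top \<times>\<^sub>F at_top)
                (principal {(t1, t2). r \<le> t1 / t2 \<and> t1 / t2 \<le> R}))"
proof -
  define c where "c = - 2 * ln \<alpha>"
  define B where "B = (\<lambda>t::real. 2 * (ln (t+1) + c) / (r * t) + 2 * (ln (t+1) + c)^2 / (r * t)
        + 12 * (ln (t+1) + c) / (t + 1))"
  define F where "F = inf (at_top \<times>\<^sub>F at_top) (principal {(t1::real, t2::real). r \<le> t1 / t2 \<and> t1 / t2 \<le> R})"
  have lim1: "((\<lambda>t::real. 2 * (ln (t+1) + c) / (r * t)) \<longlongrightarrow> 0) at_top"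
    using assms(4) by real_asymp
  have limB: "(B \<longlongrightarrow> 0) at_top"
    unfolding B_def using assms(4) by real_asymp
  have ev: "eventually (\<lambda>t::real. t \<ge> 5 \<and> r * t \<ge> 2 * real d \<and> 2 * (ln (t+1) + c) / (r * t) \<le> 1) at_top"
  proof (intro eventually_conj)
    show "eventually (\<lambda>t::real. t \<ge> 5) at_top" by (rule eventually_ge_at_top)
    show "eventually (\<lambda>t::real. r * t \<ge> 2 * real d) at_top"
      using eventually_ge_at_top[of "2 * real d / r"]
      by eventually_elim (use assms(4) in \<open>simp add: field_simps\<close>)
    show "eventually (\<lambda>t::real. 2 * (ln (t+1) + c) / (r * t) \<le> 1) at_top"
    proof -
      have "eventually (\<lambda>t::real. 2 * (ln (t+1) + c) / (r * t) < 1) at_top"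
        using lim1 by (rule order_tendstoD) simp
      thus ?thesis by eventually_elim simp
    qed
  qed
  have ev2: "eventually (\<lambda>p. snd p \<ge> 5 \<and> r * snd p \<ge> 2 * real d \<and> 2 * (ln (snd p+1) + c) / (r * snd p) \<le> 1) F"
  proof -
    have "eventually (\<lambda>p::real\<times>real. snd p \<ge> 5 \<and> r * snd p \<ge> 2 * real d \<and> 2 * (ln (snd p+1) + c) / (r * snd p) \<le> 1) (at_top \<times>\<^sub>F at_top)"
      using filterlim_snd[of "at_top::real filter" "at_top::real filter", unfolded filterlim_iff, rule_format, OF ev]
      by simp
    thus ?thesis unfolding F_def by (rule filter_leD[OF inf_le1])
  qed
  have ev3: "eventually (\<lambda>p. r \<le> fst p / snd p) F"
    unfolding F_def
    by (rule filter_leD[OF inf_le2]) (auto simp: eventually_principal)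
  have bound: "eventually (\<lambda>p. norm ((\<lambda>(t1, t2). gammaL0 d t1 t2 \<alpha> - (2 * ln (1 / \<alpha>) + ln (t2 + 1))) p) \<le> B (snd p)) F"
    using ev2 ev3
  proof eventually_elim
    case (elim p)
    obtain t1 t2 where p: "p = (t1, t2)" by force
    have t0: "t2 > 0" using elim p by simp
    have "r * t2 \<le> t1" using elim p t0 by (simp add: pos_le_divide_eq)
    from pointwise[OF assms(1,2,4) _ _ this] elim p
    show ?case by (simp add: B_def c_def)
  qed
  have "((\<lambda>p. B (snd p)) \<longlongrightarrow> 0) F"
    by (rule filterlim_compose[OF limB]) (unfold F_def, rule filterlim_mono[OF filterlim_snd order_refl inf_le1])
  from Lim_null_comparison[OF bound this] show ?thesis unfolding F_def .
qed
end
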